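(* Let $L$ be an oriented graphical virtual link, let $D$ be a graphical (i.e. checkerboard colorable) diagram of $L$, and let $G_D$ be a signed Tait graph of $D$. Then $$V_L(t)=(-t^{-\frac{3}{4}})^{-w(D)}\,F[G_D]\big(t^{-\frac14},\,t^{\frac14},\,-t^{-\frac12}-t^{\frac12}\big).$$
   Context: Virtual links are equivalence classes of virtual link diagrams (plane curves with real and virtual crossings) under generalized Reidemeister moves. A virtual link is graphical if it is represented by a diagram obtained from a signed cyclic graph (graph with cyclic order of half-edges at each vertex and edge signs) by the medial construction; equivalently (by a result of the paper) it has a checkerboard colorable diagram. A diagram is checkerboard colorable if one can color a small neighbourhood of one side of each arc so that near each real crossing the colored sides alternate and near virtual crossings the colorings of the two strands pass through independently. Bracket polynomial: $\langle D\rangle(A,B,d)=\sum_{\sigma}A^{\alpha(\sigma)}B^{\beta(\sigma)}d^{|\sigma|-1}$ over all states $\sigma$ (choice of $A$- or $B$-smoothing at each real crossing), $\alpha,\beta$ the numbers of $A$-, $B$-smoothings, $|\sigma|$ the number of closed curves. The writhe $w(D)$ is the sum of the oriented signs $\pm1$ of the real crossings. The Jones polynomial is $V_L(t)=f(t^{-1/4})$ where $f(A)=(-A^3)^{-w(D)}\langle D\rangle(A,A^{-1},-A^2-A^{-2})$. Signed Tait graph (Chmutov–Pak): given a checkerboard coloring of $D$, thicken $D$ to a surface in which bands at virtual crossings pass without touching; the colored neighbourhoods form annuli whose exterior circles run along the diagram, jumping between strands at real crossings so that the two colored corners of each crossing lie on them. Replace each real crossing by an edge-ribbon joining the exterior-circle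 arcs at the colored corners and glue discs along the interior circles; this gives an orientable signed ribbon graph, i.e. a signed cyclic graph $G_D$ (vertices = capped annuli, edges = real crossings, sign $+$ iff the $A$-smoothing joins the two colored corners). The polynomial $F[G]$ of a signed cyclic graph: edges may be "marked"; for an unmarked edge $e$, $G-e$ deletes $e$, $G(\bar e)$ keeps and marks $e$; $F[G]=B\,F[G-e]+A\,F[G(\bar e)]$ for positive $e$, $F[G]=A\,F[G-e]+B\,F[G(\bar e)]$ for negative $e$; for a spanning subgraph $H$ with all edges marked, $F[H]=d^{bc(H)-1}$, $bc(H)$ the number of boundary components of the ribbon graph of $H$. *)

theory Defs
  imports Complex_Main
begin

text \<open>A virtual link diagram up to virtual detour moves is encoded as follows. Each real crossing c has four ends
  (c,0),(c,1),(c,2),(c,3), numbered counterclockwise in the plane; the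
  over-strand runs through the ends 0 and 2, the under-strand through 1 and 3.
  The arcs of the diagram (which may pass through virtual crossings) are encoded
  by the fixed-point-free involution dg_arc on ends. Components without real
  crossings are counted by dg_loops. The orientation of the link is given by
  marking the ends at which the oriented strand leaves the crossing.
  Corner k of crossing c is the corner between ends k and k+1 (mod 4).\<close>

record 'c vdiagram =
  dg_xings :: "'c set"
  dg_arc :: "'c \<times> nat \<Rightarrow> 'c \<times> nat"
  dg_out :: "'c \<times> nat \<Rightarrow> bool"
  dg_loops :: nat

definition dg_ends :: "'c vdiagram \<Rightarrow> ('c \<times> nat) set" where
  "dg_ends D = dg_xings D \<times> {..<4}"

definition vdiagram_wf :: "'c vdiagram \<Rightarrow> bool" where
  "vdiagram_wf D \<longleftrightarrow> finite (dg_xings D)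
     \<and> (\<forall>e\<in>dg_ends D. dg_arc D e \<in> dg_ends D \<and> dg_arc D e \<noteq> e \<and> dg_arc D (dg_arc D e) = e)
     \<and> (dg_xings D \<noteq> {} \<or> dg_loops D > 0)"

definition oriented :: "'c vdiagram \<Rightarrow> bool" where
  "oriented D \<longleftrightarrow>
     (\<forall>c\<in>dg_xings D. dg_out D (c,0) \<noteq> dg_out D (c,2) \<and> dg_out D (c,1) \<noteq> dg_out D (c,3))
     \<and> (\<forall>e\<in>dg_ends D. dg_out D (dg_arc D e) \<longleftrightarrow> \<not> dg_out D e)"

text \<open>Sign of a real crossing: +1 iff the outgoing under-end is obtained from the
  outgoing over-end by a counterclockwise quarter turn (right-handed crossing).\<close>
definition xsign :: "'c vdiagram \<Rightarrow> 'c \<Rightarrow> int" where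
  "xsign D c =
     (let ov = (if dg_out D (c,0) then 0 else 2 :: nat);
          u = (if dg_out D (c,1) then 1 else 3 :: nat)
      in if u = (ov + 1) mod 4 then 1 else -1)"

definition writhe :: "'c vdiagram \<Rightarrow> int" where
  "writhe D = (\<Sum>c\<in>dg_xings D. xsign D c)"

text \<open>Smoothing of crossing c: the A-smoothing joins the two A-regions (corners
  0 and 2), i.e. it pairs the ends 0--3 and 1--2; the B-smoothing pairs 0--1 and
  2--3. A state is given by the set S of crossings receiving the A-smoothing.\<close>
definition smooth :: "'c set \<Rightarrow> 'c \<times> nat \<Rightarrow> 'c \<times> nat" where
  "smooth S e = (case e of (c,k) \<Rightarrow>
     if c \<in> S then (c, 3 - k) else (c, if even k then k + 1 else k - 1))"

text \<open>Number of closed curves of the state S: connected classes of ends under the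
  arcs and the smoothing connections, plus the crossingless components.\<close>
definition state_circles :: "'c vdiagram \<Rightarrow> 'c set \<Rightarrow> nat" where
  "state_circles D S =
     card (dg_ends D // ({(e, smooth S e) | e. e \<in> dg_ends D} \<union> {(e, dg_arc D e) | e. e \<in> dg_ends D})\<^sup>*)
     + dg_loops D"

definition bracket :: "'c vdiagram \<Rightarrow> 'a::field \<Rightarrow> 'a \<Rightarrow> 'a \<Rightarrow> 'a" where
  "bracket D A B d =
     (\<Sum>S\<in>Pow (dg_xings D). A ^ card S * B ^ card (dg_xings D - S) * d powi (int (state_circles D S) - 1))"

definition jones :: "'c vdiagram \<Rightarrow> real \<Rightarrow> real" where
  "jones D t =
     (let A = t powr (-1/4) in
       (- (A ^ 3)) powi (- writhe D) * bracket D A (inverse A) (- (A ^ 2) - (inverse A) ^ 2))"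

text \<open>A coloring is given by col c: if col c, the corners 0 and 2 (between ends
  0,1 and 2,3) are colored, otherwise corners 1 and 3. Walking out of crossing c
  along end i, corner i lies on the left; arriving at c' through end j, the left
  side is corner j-1. The coloring of each side of an arc must agree at both ends.\<close>
definition colored_corner :: "('c \<Rightarrow> bool) \<Rightarrow> 'c \<Rightarrow> nat \<Rightarrow> bool" where
  "colored_corner col c k \<longleftrightarrow> (col c \<longleftrightarrow> even k)"

definition checkerboard_coloring :: "'c vdiagram \<Rightarrow> ('c \<Rightarrow> bool) \<Rightarrow> bool" where
  "checkerboard_coloring D col \<longleftrightarrow>
     (\<forall>c\<in>dg_xings D. \<forall>i<4. case dg_arc D (c,i) of (c',j) \<Rightarrow>
        (colored_corner col c i \<longleftrightarrow> colored_corner col c' ((j + 3) mod 4)))"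

text \<open>A signed cyclic graph (orientable signed ribbon graph): vertices, half-edges,
  incidence, the cyclic successor of each half-edge around its vertex, the
  edge involution pairing the two half-edges of an edge, and the edge signs.\<close>
record ('v, 'h) scgraph =
  sg_verts :: "'v set"
  sg_hes :: "'h set"
  sg_vert :: "'h \<Rightarrow> 'v"
  sg_rot :: "'h \<Rightarrow> 'h"
  sg_opp :: "'h \<Rightarrow> 'h"
  sg_pos :: "'h \<Rightarrow> bool"

definition sg_edges :: "('v,'h) scgraph \<Rightarrow> 'h set set" where
  "sg_edges G = (\<lambda>h. {h, sg_opp G h}) ` sg_hes G"

definition rot_sub :: "('v,'h) scgraph \<Rightarrow> 'h set \<Rightarrow> 'h \<Rightarrow> 'h" where
  "rot_sub G S h = (sg_rot G ^^ (LEAST k. 0 < k \<and> (sg_rot G ^^ k) h \<in> S)) h"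

definition orbits :: "('h \<Rightarrow> 'h) \<Rightarrow> 'h set \<Rightarrow> 'h set set" where
  "orbits f S = (\<lambda>h. {(f ^^ n) h | n. True}) ` S"

text \<open>Number of boundary components of the ribbon subgraph with half-edge set S:
  the faces (orbits of rotation-after-edge-involution) plus the vertices without
  half-edges in S (each a disc with one boundary circle).\<close>
definition bc :: "('v,'h) scgraph \<Rightarrow> 'h set \<Rightarrow> nat" where
  "bc G S = card (orbits (\<lambda>h. rot_sub G S (sg_opp G h)) S)
            + card {v \<in> sg_verts G. \<forall>h\<in>S. sg_vert G h \<noteq> v}"

definition edge_pos :: "('v,'h) scgraph \<Rightarrow> 'h set \<Rightarrow> bool" where
  "edge_pos G e = sg_pos G (SOME h. h \<in> e)"

text \<open>F[G], the full expansion of the deletion/marking recursion: a sum over the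
  sets of marked edges (spanning subgraphs, given by their half-edge sets S).\<close>
definition Fpoly :: "('v,'h) scgraph \<Rightarrow> 'a::field \<Rightarrow> 'a \<Rightarrow> 'a \<Rightarrow> 'a" where
  "Fpoly G A B d =
     (\<Sum>S\<in>{S. S \<subseteq> sg_hes G \<and> (\<forall>h\<in>S. sg_opp G h \<in> S)}.
        (\<Prod>e\<in>sg_edges G. if e \<subseteq> S then (if edge_pos G e then A else B)
                                    else (if edge_pos G e then B else A))
        * d powi (int (bc G S) - 1))"

text \<open>Half-edges are the colored corners (c,k). The exterior circle of a colored
  annulus leaves the colored corner k of c along end k+1 and arrives at the
  colored corner j of c' where (c',j) is the other end of that arc. Vertices are
  the orbits of this successor map, plus one isolated vertex for every
  crossingless component. The edge of crossing c joins its two colored corners and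
  is positive iff the A-smoothing joins them, i.e. iff col c.\<close>
definition tait_rot :: "'c vdiagram \<Rightarrow> 'c \<times> nat \<Rightarrow> 'c \<times> nat" where
  "tait_rot D h = (case h of (c,k) \<Rightarrow> dg_arc D (c, (k + 1) mod 4))"

definition tait_hes :: "'c vdiagram \<Rightarrow> ('c \<Rightarrow> bool) \<Rightarrow> ('c \<times> nat) set" where
  "tait_hes D col = {(c,k). c \<in> dg_xings D \<and> k < 4 \<and> colored_corner col c k}"

definition tait_graph :: "'c vdiagram \<Rightarrow> ('c \<Rightarrow> bool) \<Rightarrow> (('c \<times> nat) set + nat, 'c \<times> nat) scgraph" where
  "tait_graph D col =
     \<lparr> sg_verts = Inl ` orbits (tait_rot D) (tait_hes D col) \<union> Inr ` {..<dg_loops D},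
       sg_hes = tait_hes D col,
       sg_vert = (\<lambda>h. Inl {(tait_rot D ^^ n) h | n. True}),
       sg_rot = tait_rot D,
       sg_opp = (\<lambda>(c,k). (c, (k + 2) mod 4)),
       sg_pos = (\<lambda>(c,k). col c) \<rparr>"

end

theory Submission
  imports Defs
begin


definition orb :: "('h \<Rightarrow> 'h) \<Rightarrow> 'h \<Rightarrow> 'h set" where
  "orb f x = {(f ^^ n) x | n. True}"

lemma orbits_orb: "orbits f S = orb f ` S"
  unfolding orbits_def orb_def by simp

lemma card_image_cong_eq:
  assumes "\<And>x y. x \<in> C \<Longrightarrow> y \<in> C \<Longrightarrow> f x = f y \<longleftrightarrow> g x = g y"
  shows "card (f ` C) = card (g ` C)"
proof -
  define h where "h K = g (SOME x. x \<in> C \<and> f x = K)" for K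
  have 1: "h (f x) = g x" if "x \<in> C" for x
  proof -
    have "\<exists>z. z \<in> C \<and> f z = f x" using that by blast
    then have "(SOME z. z \<in> C \<and> f z = f x) \<in> C \<and> f (SOME z. z \<in> C \<and> f z = f x) = f x" by (rule someI_ex)
    then show ?thesis unfolding h_def using assms that by blast
  qed
  have "g ` C = h ` (f ` C)" using 1 by (force simp: image_image)
  moreover have "inj_on h (f ` C)"
    unfolding inj_on_def using 1 assms by auto
  ultimately show ?thesis by (simp add: card_image)
qed




lemma funpow_in:
  assumes cl: "\<And>x. x \<in> C \<Longrightarrow> f x \<in> C" and x: "x \<in> C"
  shows "(f ^^ n) x \<in> C"
proof (induction n)
  case 0 show ?case using x by simp
next
  case (Suc n) then show ?case using cl[of "(f ^^ n) x"] by simp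
qed

lemma orb_subset:
  assumes cl: "\<And>x. x \<in> C \<Longrightarrow> f x \<in> C" and x: "x \<in> C"
  shows "orb f x \<subseteq> C"
proof
  fix y assume "y \<in> orb f x"
  then obtain n where "y = (f ^^ n) x" unfolding orb_def by blast
  then show "y \<in> C" using funpow_in[where f=f and C=C, OF cl x, where n=n] by simp
qed

lemma funpow_cancel:
  assumes inj: "inj_on f C" and cl: "\<And>x. x \<in> C \<Longrightarrow> f x \<in> C"
  shows "a \<in> C \<Longrightarrow> b \<in> C \<Longrightarrow> (f ^^ n) a = (f ^^ n) b \<Longrightarrow> a = b"
proof (induction n)
  case 0 then show ?case by simp
next
  case (Suc n)
  have "(f ^^ n) a \<in> C" "(f ^^ n) b \<in> C"
    using funpow_in[where f=f and C=C, OF cl Suc.prems(1)] funpow_in[where f=f and C=C, OF cl Suc.prems(2)] by auto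
  moreover have "f ((f ^^ n) a) = f ((f ^^ n) b)" using Suc.prems(3) by simp
  ultimately have "(f ^^ n) a = (f ^^ n) b"
    using inj unfolding inj_on_def by blast
  then show ?case using Suc.IH Suc.prems(1,2) by blast
qed

lemma perm_period:
  assumes fin: "finite C" and cl: "\<And>x. x \<in> C \<Longrightarrow> f x \<in> C" and inj: "inj_on f C" and x: "x \<in> C"
  shows "\<exists>p>0. (f ^^ p) x = x"
proof -
  let ?g = "\<lambda>n. (f ^^ n) x"
  have "\<not> inj_on ?g {0..card C}"
  proof
    assume "inj_on ?g {0..card C}"
    then have "card (?g ` {0..card C}) = card {0..card C}" by (rule card_image)
    moreover have "?g ` {0..card C} \<subseteq> C" using funpow_in[where f=f and C=C, OF cl x] by blast
    then have "card (?g ` {0..card C}) \<le> card C" using fin by (simp add: card_mono)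
    ultimately show False by simp
  qed
  then obtain i j where ij0: "i \<noteq> j" "(f^^i) x = (f^^j) x" unfolding inj_on_def by blast
  then have "\<exists>i j. i < j \<and> (f^^i) x = (f^^j) x" by (metis linorder_neqE_nat)
  then obtain i j where ij: "i < j" "(f^^i) x = (f^^j) x" by blast
  have "(f^^j) x = (f^^i) ((f^^(j-i)) x)"
    using ij(1) funpow_add[where f=f and m=i and n="j-i"] by (simp add: o_def)
  then have eq: "(f^^i) x = (f^^i) ((f^^(j-i)) x)" using ij(2) by simp
  have "(f^^(j-i)) x = x"
    using funpow_cancel[OF inj cl x funpow_in[where f=f and C=C, OF cl x] eq] by simp
  then show ?thesis using ij(1) by (intro exI[of _ "j-i"]) simp
qed

lemma orb_self: "x \<in> orb f x"
  unfolding orb_def by (auto intro: exI[of _ 0])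

lemma orb_trans: "y \<in> orb f x \<Longrightarrow> z \<in> orb f y \<Longrightarrow> z \<in> orb f x"
proof -
  assume "y \<in> orb f x" "z \<in> orb f y"
  then obtain m n where "y = (f^^m) x" "z = (f^^n) y" unfolding orb_def by auto
  then have "z = (f^^(n+m)) x" by (simp add: funpow_add)
  then show ?thesis unfolding orb_def by blast
qed

lemma orb_step: "y \<in> orb f x \<Longrightarrow> f y \<in> orb f x"
proof -
  assume "y \<in> orb f x"
  then obtain m where "y = (f^^m) x" unfolding orb_def by auto
  then have "f y = (f^^(Suc m)) x" by simp
  then show ?thesis unfolding orb_def by blast
qed

lemma orb_sym:
  assumes fin: "finite C" and cl: "\<And>x. x \<in> C \<Longrightarrow> f x \<in> C" and inj: "inj_on f C" and x: "x \<in> C"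
    and y: "y \<in> orb f x"
  shows "x \<in> orb f y"
proof -
  obtain n where n: "y = (f^^n) x" using y unfolding orb_def by auto
  obtain p where p: "p > 0" "(f^^p) x = x" using perm_period[where f=f and C=C, OF fin cl inj x] by blast
  have pk: "((f^^p)^^k) x = x" for k by (induction k) (simp_all add: p)
  have "(f^^(p*n)) x = x" using pk[of n] by (simp add: funpow_mult)
  moreover have pn: "(p*n - n) + n = p * n" using p(1) by (simp add: mult.commute)
  moreover have "(f^^(p*n - n)) ((f^^n) x) = (f^^((p*n - n) + n)) x"
    by (simp only: funpow_add comp_apply)
  ultimately have "(f^^(p*n - n)) ((f^^n) x) = x" by metis
  then have "x = (f^^(p*n - n)) y" using n by simp
  then show ?thesis unfolding orb_def by blast
qed

lemma orb_eq_iff: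
  assumes fin: "finite C" and cl: "\<And>x. x \<in> C \<Longrightarrow> f x \<in> C" and inj: "inj_on f C" and x: "x \<in> C"
    and y: "y \<in> C"
  shows "orb f x = orb f y \<longleftrightarrow> y \<in> orb f x"
proof
  assume "orb f x = orb f y" then show "y \<in> orb f x" using orb_self[of y f] by simp
next
  assume h: "y \<in> orb f x"
  then have h2: "x \<in> orb f y" using orb_sym[where f=f and C=C, OF fin cl inj x] by blast
  show "orb f x = orb f y"
  proof (rule equalityI; rule subsetI)
    fix z assume "z \<in> orb f x" then show "z \<in> orb f y" using orb_trans[OF h2] by blast
  next
    fix z assume "z \<in> orb f y" then show "z \<in> orb f x" using orb_trans[OF h] by blast
  qed
qed



lemma lemmaA:
  assumes fin: "finite E"
    and sE: "\<And>e. e \<in> E \<Longrightarrow> s e \<in> E" and ss: "\<And>e. e \<in> E \<Longrightarrow> s (s e) = e"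
    and aE: "\<And>e. e \<in> E \<Longrightarrow> a e \<in> E" and aa: "\<And>e. e \<in> E \<Longrightarrow> a (a e) = e"
    and CE: "C \<subseteq> E"
    and sC: "\<And>e. e \<in> E \<Longrightarrow> e \<in> C \<longleftrightarrow> s e \<notin> C"
    and aC: "\<And>e. e \<in> E \<Longrightarrow> e \<in> C \<longleftrightarrow> a e \<notin> C"
  shows "card (E // ({(e, s e) | e. e \<in> E} \<union> {(e, a e) | e. e \<in> E})\<^sup>*) = card (orb (\<lambda>h. a (s h)) ` C)"
proof -
  define R where "R = {(e, s e) | e. e \<in> E} \<union> {(e, a e) | e. e \<in> E}"
  define \<tau> where "\<tau> = (\<lambda>h. a (s h))"
  have finC: "finite C" using fin CE by (rule finite_subset[rotated])
  have cl: "\<tau> x \<in> C" if "x \<in> C" for x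
  proof -
    have xE: "x \<in> E" using that CE by blast
    have "s x \<notin> C" using sC[OF xE] that by simp
    moreover have "s x \<in> E" using sE[OF xE] .
    ultimately have "a (s x) \<in> C" using aC[of "s x"] by simp
    then show ?thesis unfolding \<tau>_def .
  qed
  have inj: "inj_on \<tau> C"
  proof (rule inj_onI)
    fix x y assume x: "x \<in> C" and y: "y \<in> C" and e: "\<tau> x = \<tau> y"
    have xE: "x \<in> E" and yE: "y \<in> E" using x y CE by auto
    have "a (a (s x)) = a (a (s y))" using e unfolding \<tau>_def by simp
    then have "s x = s y" using aa[OF sE[OF xE]] aa[OF sE[OF yE]] by simp
    then have "s (s x) = s (s y)" by simp
    then show "x = y" using ss[OF xE] ss[OF yE] by simp
  qed
  have Rcases: "(x, y) \<in> R \<longleftrightarrow> x \<in> E \<and> (y = s x \<or> y = a x)" for x y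
    unfolding R_def by blast
  have symR: "sym R"
  proof (rule symI)
    fix x y assume "(x, y) \<in> R"
    then have xE: "x \<in> E" and yy: "y = s x \<or> y = a x" using Rcases by auto
    then show "(y, x) \<in> R"
    proof (elim disjE)
      assume "y = s x" then show ?thesis using Rcases sE[OF xE] ss[OF xE] by simp
    next
      assume "y = a x" then show ?thesis using Rcases aE[OF xE] aa[OF xE] by simp
    qed
  qed
  have symRs: "(y, x) \<in> R\<^sup>*" if "(x, y) \<in> R\<^sup>*" for x y
    using that symR sym_rtrancl[of R] unfolding sym_def by blast
  have cls: "R\<^sup>* `` {x} = R\<^sup>* `` {y} \<longleftrightarrow> (x, y) \<in> R\<^sup>*" for x y
  proof
    assume h: "R\<^sup>* `` {x} = R\<^sup>* `` {y}"
    have "y \<in> R\<^sup>* `` {y}" by simp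
    then have "y \<in> R\<^sup>* `` {x}" using h by simp
    then show "(x, y) \<in> R\<^sup>*" by simp
  next
    assume h: "(x, y) \<in> R\<^sup>*"
    show "R\<^sup>* `` {x} = R\<^sup>* `` {y}"
    proof (rule equalityI; rule subsetI)
      fix z assume "z \<in> R\<^sup>* `` {x}"
      then have "(x, z) \<in> R\<^sup>*" by simp
      then have "(y, z) \<in> R\<^sup>*" using symRs[OF h] by (rule rtrancl_trans[rotated])
      then show "z \<in> R\<^sup>* `` {y}" by simp
    next
      fix z assume "z \<in> R\<^sup>* `` {y}"
      then have "(y, z) \<in> R\<^sup>*" by simp
      then have "(x, z) \<in> R\<^sup>*" using h by (rule rtrancl_trans[rotated])
      then show "z \<in> R\<^sup>* `` {x}" by simp
    qed
  qed
  have q: "E // R\<^sup>* = (\<lambda>x. R\<^sup>* `` {x}) ` E" unfolding quotient_def by blast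
  have q2: "(\<lambda>x. R\<^sup>* `` {x}) ` E = (\<lambda>x. R\<^sup>* `` {x}) ` C"
  proof
    show "(\<lambda>x. R\<^sup>* `` {x}) ` C \<subseteq> (\<lambda>x. R\<^sup>* `` {x}) ` E" using CE by (rule image_mono)
  next
    show "(\<lambda>x. R\<^sup>* `` {x}) ` E \<subseteq> (\<lambda>x. R\<^sup>* `` {x}) ` C"
    proof
      fix K assume "K \<in> (\<lambda>x. R\<^sup>* `` {x}) ` E"
      then obtain e where e: "e \<in> E" "K = R\<^sup>* `` {e}" by blast
      show "K \<in> (\<lambda>x. R\<^sup>* `` {x}) ` C"
      proof (cases "e \<in> C")
        case True then show ?thesis using e by blast
      next
        case False
        then have sC': "s e \<in> C" using sC[OF e(1)] by simp
        have "(e, s e) \<in> R" using Rcases e(1) by simp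
        then have "(e, s e) \<in> R\<^sup>*" by simp
        then have "K = R\<^sup>* `` {s e}" using e(2) cls by simp
        then show ?thesis using sC' by blast
      qed
    qed
  qed
  have key1: "(x, (\<tau>^^n) x) \<in> R\<^sup>*" if x: "x \<in> C" for x n
  proof (induction n)
    case 0 then show ?case by simp
  next
    case (Suc n)
    let ?y = "(\<tau>^^n) x"
    have "?y \<in> C" using funpow_in[where f=\<tau> and C=C, OF cl x] .
    then have yE: "?y \<in> E" using CE by blast
    have r1: "(?y, s ?y) \<in> R" using Rcases yE by simp
    have r2: "(s ?y, a (s ?y)) \<in> R" using Rcases sE[OF yE] by simp
    have "(x, s ?y) \<in> R\<^sup>*" using Suc.IH r1 by (rule rtrancl_into_rtrancl)
    then have "(x, a (s ?y)) \<in> R\<^sup>*" using r2 by (rule rtrancl_into_rtrancl)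
    then show ?case by (simp add: \<tau>_def)
  qed
  have key2: "y \<in> orb \<tau> x" if x: "x \<in> C" and y: "y \<in> C" and xy: "(x, y) \<in> R\<^sup>*" for x y
  proof -
    define K where "K = {e \<in> E. (e \<in> C \<longrightarrow> e \<in> orb \<tau> x) \<and> (e \<notin> C \<longrightarrow> s e \<in> orb \<tau> x)}"
    have "y \<in> K" using xy
    proof (induction rule: rtrancl_induct)
      case base
      have "x \<in> E" using x CE by blast
      then show ?case unfolding K_def using orb_self[of x \<tau>] x by simp
    next
      case (step y z)
      have yE: "y \<in> E" and yK1: "y \<in> C \<Longrightarrow> y \<in> orb \<tau> x" and yK2: "y \<notin> C \<Longrightarrow> s y \<in> orb \<tau> x"
        using step(3) unfolding K_def by auto
      from step(2) have "z = s y \<or> z = a y" using Rcases by simp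
      then show ?case
      proof (elim disjE)
        assume z: "z = s y"
        have zE: "z \<in> E" using z sE[OF yE] by simp
        show ?thesis
        proof (cases "y \<in> C")
          case True
          then have "z \<notin> C" using sC[OF yE] z by simp
          moreover have "s z = y" using z ss[OF yE] by simp
          ultimately show ?thesis unfolding K_def using zE yK1[OF True] by simp
        next
          case False
          then have "z \<in> C" using sC[OF yE] z by simp
          then show ?thesis unfolding K_def using zE yK2[OF False] z by simp
        qed
      next
        assume z: "z = a y"
        have zE: "z \<in> E" using z aE[OF yE] by simp
        show ?thesis
        proof (cases "y \<in> C")
          case True
          have zC: "z \<notin> C" using aC[OF yE] True z by simp
          have szC: "s z \<in> C" using sC[OF zE] zC by simp
          have "\<tau> (s z) = y" unfolding \<tau>_def using z ss[OF zE] aa[OF yE] by simp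
          then have "y \<in> orb \<tau> (s z)" using orb_step[OF orb_self[of "s z" \<tau>]] by simp
          then have "s z \<in> orb \<tau> y" using orb_sym[where f=\<tau> and C=C, OF finC cl inj szC] by blast
          then have "s z \<in> orb \<tau> x" using orb_trans[OF yK1[OF True]] by blast
          then show ?thesis unfolding K_def using zE zC by simp
        next
          case False
          have zC: "z \<in> C" using aC[OF yE] False z by simp
          have "\<tau> (s y) = z" unfolding \<tau>_def z using ss[OF yE] by simp
          then have "z \<in> orb \<tau> x" using orb_step[OF yK2[OF False]] by simp
          then show ?thesis unfolding K_def using zE zC by simp
        qed
      qed
    qed
    then show ?thesis unfolding K_def using y by simp
  qed
  have "card ((\<lambda>x. R\<^sup>* `` {x}) ` C) = card (orb \<tau> ` C)"
  proof (rule card_image_cong_eq)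
    fix x y assume x: "x \<in> C" and y: "y \<in> C"
    have "R\<^sup>* `` {x} = R\<^sup>* `` {y} \<longleftrightarrow> (x, y) \<in> R\<^sup>*" by (rule cls)
    also have "\<dots> \<longleftrightarrow> y \<in> orb \<tau> x"
    proof
      assume "(x, y) \<in> R\<^sup>*" then show "y \<in> orb \<tau> x" using key2[OF x y] by simp
    next
      assume "y \<in> orb \<tau> x"
      then obtain n where "y = (\<tau>^^n) x" unfolding orb_def by blast
      then show "(x, y) \<in> R\<^sup>*" using key1[OF x] by simp
    qed
    also have "\<dots> \<longleftrightarrow> orb \<tau> x = orb \<tau> y" using orb_eq_iff[where f=\<tau> and C=C, OF finC cl inj x y] by simp
    finally show "R\<^sup>* `` {x} = R\<^sup>* `` {y} \<longleftrightarrow> orb \<tau> x = orb \<tau> y" .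
  qed
  then show ?thesis using q q2 unfolding R_def \<tau>_def by simp
qed



lemma lemmaB:
  assumes fin: "finite C" and cl: "\<And>x. x \<in> C \<Longrightarrow> \<tau> x \<in> C" and inj: "inj_on \<tau> C" and SC: "S \<subseteq> C"
    and phi: "\<And>h. h \<in> S \<Longrightarrow> \<phi> h = (\<tau> ^^ (LEAST k. 0 < k \<and> (\<tau> ^^ k) h \<in> S)) h"
  shows "card (orb \<phi> ` S) + card {Q \<in> orb \<tau> ` C. Q \<inter> S = {}} = card (orb \<tau> ` C)"
proof -
  define ret where "ret h = (LEAST k. 0 < k \<and> (\<tau> ^^ k) h \<in> S)" for h
  have ret1: "0 < ret h \<and> (\<tau> ^^ ret h) h \<in> S" if h: "h \<in> S" for h
  proof -
    have hC: "h \<in> C" using h SC by blast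
    obtain p where p: "p > 0" "(\<tau> ^^ p) h = h" using perm_period[where f=\<tau> and C=C, OF fin cl inj hC] by blast
    have "\<exists>k. 0 < k \<and> (\<tau> ^^ k) h \<in> S" using p h by (intro exI[of _ p]) simp
    then show ?thesis unfolding ret_def by (rule LeastI_ex)
  qed
  have ret2: "\<not> (0 < k \<and> (\<tau> ^^ k) h \<in> S)" if "k < ret h" for h k
    using that unfolding ret_def by (rule not_less_Least)
  have phi': "\<phi> h = (\<tau> ^^ ret h) h" if "h \<in> S" for h using phi[OF that] unfolding ret_def .
  have phiS: "\<phi> h \<in> S" if "h \<in> S" for h using ret1[OF that] phi'[OF that] by simp
  have claim1: "(\<phi> ^^ n) x \<in> orb \<tau> x" if x: "x \<in> S" for x n
  proof (induction n)
    case 0 then show ?case using orb_self[of x \<tau>] by simp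
  next
    case (Suc n)
    let ?y = "(\<phi> ^^ n) x"
    have yS: "?y \<in> S" using funpow_in[where f=\<phi> and C=S, OF phiS x] .
    have "(\<tau> ^^ ret ?y) ?y \<in> orb \<tau> ?y" unfolding orb_def by blast
    then have "(\<tau> ^^ ret ?y) ?y \<in> orb \<tau> x" using orb_trans[OF Suc.IH] by blast
    then show ?case using phi'[OF yS] by simp
  qed
  have claim2: "\<And>x. x \<in> S \<Longrightarrow> (\<tau> ^^ n) x \<in> S \<Longrightarrow> (\<tau> ^^ n) x \<in> orb \<phi> x" for n
  proof (induction n rule: less_induct)
    case (less n)
    show ?case
    proof (cases "n = 0")
      case True then show ?thesis using orb_self[of x \<phi>] by simp
    next
      case False
      let ?r = "ret x"
      have r: "0 < ?r" "(\<tau> ^^ ?r) x \<in> S" using ret1[OF less.prems(1)] by auto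
      have "\<not> n < ?r" using ret2[of n x] False less.prems(2) by auto
      then have rn: "?r \<le> n" by simp
      have eq: "(\<tau> ^^ n) x = (\<tau> ^^ (n - ?r)) (\<phi> x)"
      proof -
        have "(\<tau> ^^ n) x = (\<tau> ^^ ((n - ?r) + ?r)) x" using rn by simp
        also have "\<dots> = (\<tau> ^^ (n - ?r)) ((\<tau> ^^ ?r) x)" by (simp only: funpow_add comp_apply)
        finally show ?thesis using phi'[OF less.prems(1)] by simp
      qed
      have lt: "n - ?r < n" using r(1) False by simp
      have pS: "\<phi> x \<in> S" using phiS[OF less.prems(1)] .
      have "(\<tau> ^^ (n - ?r)) (\<phi> x) \<in> orb \<phi> (\<phi> x)"
        using less.IH[OF lt pS] less.prems(2) eq by simp
      moreover have "\<phi> x \<in> orb \<phi> x" using orb_step[OF orb_self[of x \<phi>]] .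
      ultimately show ?thesis using eq orb_trans by metis
    qed
  qed
  have same: "y \<in> orb \<phi> x \<longleftrightarrow> y \<in> orb \<tau> x" if x: "x \<in> S" and y: "y \<in> S" for x y
  proof
    assume "y \<in> orb \<phi> x"
    then obtain n where "y = (\<phi> ^^ n) x" unfolding orb_def by blast
    then show "y \<in> orb \<tau> x" using claim1[OF x] by simp
  next
    assume "y \<in> orb \<tau> x"
    then obtain n where n: "y = (\<tau> ^^ n) x" unfolding orb_def by blast
    then show "y \<in> orb \<phi> x" using claim2[OF x] y by simp
  qed
  have eqv: "orb \<phi> x = orb \<phi> y \<longleftrightarrow> orb \<tau> x = orb \<tau> y" if x: "x \<in> S" and y: "y \<in> S" for x y
  proof -
    have xC: "x \<in> C" and yC: "y \<in> C" using x y SC by auto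
    have "orb \<tau> x = orb \<tau> y \<longleftrightarrow> y \<in> orb \<tau> x" using orb_eq_iff[where f=\<tau> and C=C, OF fin cl inj xC yC] .
    also have "\<dots> \<longleftrightarrow> y \<in> orb \<phi> x" using same[OF x y] by simp
    also have "\<dots> \<longleftrightarrow> orb \<phi> x = orb \<phi> y"
    proof
      assume h: "y \<in> orb \<phi> x"
      then have "y \<in> orb \<tau> x" using same[OF x y] by simp
      then have "x \<in> orb \<tau> y" using orb_sym[where f=\<tau> and C=C, OF fin cl inj xC] by blast
      then have h2: "x \<in> orb \<phi> y" using same[OF y x] by simp
      show "orb \<phi> x = orb \<phi> y"
      proof (rule equalityI; rule subsetI)
        fix z assume "z \<in> orb \<phi> x" then show "z \<in> orb \<phi> y" using orb_trans[OF h2] by blast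
      next
        fix z assume "z \<in> orb \<phi> y" then show "z \<in> orb \<phi> x" using orb_trans[OF h] by blast
      qed
    next
      assume "orb \<phi> x = orb \<phi> y" then show "y \<in> orb \<phi> x" using orb_self[of y \<phi>] by simp
    qed
    finally show ?thesis by simp
  qed
  have c1: "card (orb \<phi> ` S) = card (orb \<tau> ` S)"
    by (rule card_image_cong_eq) (rule eqv)
  have split: "orb \<tau> ` C = orb \<tau> ` S \<union> {Q \<in> orb \<tau> ` C. Q \<inter> S = {}}"
  proof (rule equalityI; rule subsetI)
    fix Q assume "Q \<in> orb \<tau> ` C"
    then obtain x where x: "x \<in> C" "Q = orb \<tau> x" by blast
    show "Q \<in> orb \<tau> ` S \<union> {Q \<in> orb \<tau> ` C. Q \<inter> S = {}}"
    proof (cases "Q \<inter> S = {}")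
      case True then show ?thesis using \<open>Q \<in> orb \<tau> ` C\<close> by blast
    next
      case False
      then obtain y where y: "y \<in> Q" "y \<in> S" by blast
      have yC: "y \<in> C" using y SC by blast
      have "orb \<tau> x = orb \<tau> y" using orb_eq_iff[where f=\<tau> and C=C, OF fin cl inj x(1) yC] y x by simp
      then show ?thesis using x y by blast
    qed
  next
    fix Q assume "Q \<in> orb \<tau> ` S \<union> {Q \<in> orb \<tau> ` C. Q \<inter> S = {}}"
    then show "Q \<in> orb \<tau> ` C" using SC by blast
  qed
  have disj: "orb \<tau> ` S \<inter> {Q \<in> orb \<tau> ` C. Q \<inter> S = {}} = {}"
  proof (rule equals0I)
    fix Q assume "Q \<in> orb \<tau> ` S \<inter> {Q \<in> orb \<tau> ` C. Q \<inter> S = {}}"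
    then obtain x where "x \<in> S" "Q = orb \<tau> x" "Q \<inter> S = {}" by blast
    then show False using orb_self[of x \<tau>] by blast
  qed
  have "card (orb \<tau> ` C) = card (orb \<tau> ` S) + card {Q \<in> orb \<tau> ` C. Q \<inter> S = {}}"
  proof -
    have f1: "finite (orb \<tau> ` S)" using fin SC finite_subset by blast
    have f2: "finite {Q \<in> orb \<tau> ` C. Q \<inter> S = {}}" using fin by simp
    have "card (orb \<tau> ` S \<union> {Q \<in> orb \<tau> ` C. Q \<inter> S = {}}) = card (orb \<tau> ` S) + card {Q \<in> orb \<tau> ` C. Q \<inter> S = {}}"
      using card_Un_disjoint[OF f1 f2 disj] .
    then show ?thesis using split by simp
  qed
  then show ?thesis using c1 by simp
qed



lemma lemmaC:
  assumes fin: "finite C" and cl: "\<And>x. x \<in> C \<Longrightarrow> rot x \<in> C" and inj: "inj_on rot C" and SC: "S \<subseteq> C"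
    and g: "g \<in> S" and th: "\<tau> h = rot g" and tr: "\<And>x. x \<in> C \<Longrightarrow> x \<notin> S \<Longrightarrow> \<tau> x = rot x"
  shows "(rot ^^ (LEAST k. 0 < k \<and> (rot ^^ k) g \<in> S)) g = (\<tau> ^^ (LEAST k. 0 < k \<and> (\<tau> ^^ k) h \<in> S)) h"
proof -
  define m where "m = (LEAST k. 0 < k \<and> (rot ^^ k) g \<in> S)"
  have gC: "g \<in> C" using g SC by blast
  obtain p where p: "p > 0" "(rot ^^ p) g = g" using perm_period[where f=rot and C=C, OF fin cl inj gC] by blast
  have ex: "\<exists>k. 0 < k \<and> (rot ^^ k) g \<in> S" using p g by (intro exI[of _ p]) simp
  have Pm: "0 < m \<and> (rot ^^ m) g \<in> S" unfolding m_def using ex by (rule LeastI_ex)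
  have below: "\<not> (0 < k \<and> (rot ^^ k) g \<in> S)" if "k < m" for k
    using that unfolding m_def by (rule not_less_Least)
  have claim: "0 < j \<Longrightarrow> j \<le> m \<Longrightarrow> (\<tau> ^^ j) h = (rot ^^ j) g" for j
  proof (induction j)
    case 0 then show ?case by simp
  next
    case (Suc j)
    show ?case
    proof (cases "j = 0")
      case True then show ?thesis using th by simp
    next
      case False
      have IH: "(\<tau> ^^ j) h = (rot ^^ j) g" using Suc False by simp
      have "j < m" using Suc.prems by simp
      then have nS: "(rot ^^ j) g \<notin> S" using below[of j] False by simp
      have inC: "(rot ^^ j) g \<in> C" using funpow_in[where f=rot and C=C, OF cl gC] .
      have "(\<tau> ^^ Suc j) h = \<tau> ((rot ^^ j) g)" using IH by simp
      also have "\<dots> = rot ((rot ^^ j) g)" using tr[OF inC nS] .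
      finally show ?thesis by simp
    qed
  qed
  have "(LEAST k. 0 < k \<and> (\<tau> ^^ k) h \<in> S) = m"
  proof (rule Least_equality)
    show "0 < m \<and> (\<tau> ^^ m) h \<in> S" using Pm claim[of m] by simp
  next
    fix k assume k: "0 < k \<and> (\<tau> ^^ k) h \<in> S"
    show "m \<le> k"
    proof (rule ccontr)
      assume "\<not> m \<le> k"
      then have "k < m" by simp
      then show False using below[of k] claim[of k] k by simp
    qed
  qed
  then show ?thesis using claim[of m] Pm unfolding m_def by simp
qed

lemma lemmaD:
  assumes fin: "finite C" and cl: "\<And>x. x \<in> C \<Longrightarrow> rot x \<in> C" and inj: "inj_on rot C"
    and clt: "\<And>x. x \<in> C \<Longrightarrow> \<tau> x \<in> C" and injt: "inj_on \<tau> C"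
    and tr: "\<And>x. x \<in> C \<Longrightarrow> x \<notin> S \<Longrightarrow> \<tau> x = rot x"
  shows "{Q \<in> orb rot ` C. \<forall>h\<in>S. orb rot h \<noteq> Q} = {Q \<in> orb \<tau> ` C. Q \<inter> S = {}}"
proof -
  have eq1: "orb \<tau> x = orb rot x" if x: "x \<in> C" and d: "orb rot x \<inter> S = {}" for x
  proof -
    have "(\<tau> ^^ n) x = (rot ^^ n) x" for n
    proof (induction n)
      case 0 then show ?case by simp
    next
      case (Suc n)
      have inC: "(rot ^^ n) x \<in> C" using funpow_in[where f=rot and C=C, OF cl x] .
      have "(rot ^^ n) x \<in> orb rot x" unfolding orb_def by blast
      then have nS: "(rot ^^ n) x \<notin> S" using d by blast
      show ?case using Suc.IH tr[OF inC nS] by simp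
    qed
    then show ?thesis unfolding orb_def by simp
  qed
  have eq2: "orb \<tau> x = orb rot x" if x: "x \<in> C" and d: "orb \<tau> x \<inter> S = {}" for x
  proof -
    have "(\<tau> ^^ n) x = (rot ^^ n) x" for n
    proof (induction n)
      case 0 then show ?case by simp
    next
      case (Suc n)
      have inC: "(\<tau> ^^ n) x \<in> C" using funpow_in[where f=\<tau> and C=C, OF clt x] .
      have "(\<tau> ^^ n) x \<in> orb \<tau> x" unfolding orb_def by blast
      then have nS: "(\<tau> ^^ n) x \<notin> S" using d by blast
      show ?case using Suc.IH tr[OF inC nS] by simp
    qed
    then show ?thesis unfolding orb_def by simp
  qed
  have iff: "(\<forall>h\<in>S. orb rot h \<noteq> orb rot x) \<longleftrightarrow> orb rot x \<inter> S = {}" if x: "x \<in> C" for x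
  proof
    assume a: "\<forall>h\<in>S. orb rot h \<noteq> orb rot x"
    show "orb rot x \<inter> S = {}"
    proof (rule equals0I)
      fix y assume y: "y \<in> orb rot x \<inter> S"
      have yC: "y \<in> C" using y orb_subset[where f=rot and C=C, OF cl x] by blast
      have "orb rot x = orb rot y" using orb_eq_iff[where f=rot and C=C, OF fin cl inj x yC] y by simp
      then show False using a y by blast
    qed
  next
    assume d: "orb rot x \<inter> S = {}"
    show "\<forall>h\<in>S. orb rot h \<noteq> orb rot x"
    proof
      fix h assume h: "h \<in> S"
      show "orb rot h \<noteq> orb rot x"
      proof
        assume "orb rot h = orb rot x"
        then have "h \<in> orb rot x" using orb_self[of h rot] by simp
        then show False using d h by blast
      qed
    qed
  qed
  show ?thesis
  proof (rule equalityI; rule subsetI)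
    fix Q assume "Q \<in> {Q \<in> orb rot ` C. \<forall>h\<in>S. orb rot h \<noteq> Q}"
    then obtain x where x: "x \<in> C" "Q = orb rot x" "\<forall>h\<in>S. orb rot h \<noteq> Q" by blast
    then have d: "orb rot x \<inter> S = {}" using iff[OF x(1)] by simp
    have "Q = orb \<tau> x" using eq1[OF x(1) d] x(2) by simp
    then show "Q \<in> {Q \<in> orb \<tau> ` C. Q \<inter> S = {}}" using x(1) d x(2) by blast
  next
    fix Q assume "Q \<in> {Q \<in> orb \<tau> ` C. Q \<inter> S = {}}"
    then obtain x where x: "x \<in> C" "Q = orb \<tau> x" "Q \<inter> S = {}" by blast
    have e: "orb \<tau> x = orb rot x" using eq2[OF x(1)] x(2,3) by simp
    then have d: "orb rot x \<inter> S = {}" using x by simp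
    then have "\<forall>h\<in>S. orb rot h \<noteq> orb rot x" using iff[OF x(1)] by simp
    then show "Q \<in> {Q \<in> orb rot ` C. \<forall>h\<in>S. orb rot h \<noteq> Q}" using x(1,2) e by auto
  qed
qed



lemma k4_cases: "(k::nat) < 4 \<Longrightarrow> k = 0 \<or> k = 1 \<or> k = 2 \<or> k = 3" by auto

definition mk :: "'c vdiagram \<Rightarrow> ('c \<Rightarrow> bool) \<Rightarrow> 'c set \<Rightarrow> ('c \<times> nat) set" where
  "mk D col S' = {h \<in> tait_hes D col. (fst h \<in> S') = col (fst h)}"

lemma ends_iff: "(c,k) \<in> dg_ends D \<longleftrightarrow> c \<in> dg_xings D \<and> k < 4"
  by (simp add: dg_ends_def)

lemma hes_iff: "(c,k) \<in> tait_hes D col \<longleftrightarrow> c \<in> dg_xings D \<and> k < 4 \<and> colored_corner col c k"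
  by (simp add: tait_hes_def)

lemma mk_iff: "(c,k) \<in> mk D col S' \<longleftrightarrow> (c,k) \<in> tait_hes D col \<and> (c \<in> S' \<longleftrightarrow> col c)"
  by (simp add: mk_def)

lemma hes_ends: "tait_hes D col \<subseteq> dg_ends D"
  by (auto simp: tait_hes_def dg_ends_def)

lemma arc_props:
  assumes wf: "vdiagram_wf D" and e: "e \<in> dg_ends D"
  shows "dg_arc D e \<in> dg_ends D" "dg_arc D (dg_arc D e) = e"
  using assms unfolding vdiagram_wf_def by auto

lemma arc_col:
  assumes wf: "vdiagram_wf D" and cb: "checkerboard_coloring D col" and e: "e \<in> dg_ends D"
  shows "e \<in> tait_hes D col \<longleftrightarrow> dg_arc D e \<notin> tait_hes D col"
proof -
  obtain c i where ce: "e = (c,i)" by force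
  have ci: "c \<in> dg_xings D" "i < 4" using e ce by (auto simp: ends_iff)
  obtain c' j where a: "dg_arc D (c,i) = (c',j)" by force
  have "(c',j) \<in> dg_ends D" using arc_props(1)[OF wf e] a ce by simp
  then have cj: "c' \<in> dg_xings D" "j < 4" by (auto simp: ends_iff)
  have "colored_corner col c i \<longleftrightarrow> colored_corner col c' ((j + 3) mod 4)"
    using cb ci a unfolding checkerboard_coloring_def by fastforce
  moreover have "colored_corner col c' ((j + 3) mod 4) \<longleftrightarrow> \<not> colored_corner col c' j"
    using k4_cases[OF cj(2)] by (auto simp: colored_corner_def)
  ultimately show ?thesis using ci cj a ce by (simp add: hes_iff)
qed

lemma smooth_props:
  assumes e: "e \<in> dg_ends D"
  shows "smooth S e \<in> dg_ends D" "smooth S (smooth S e) = e"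
    "e \<in> tait_hes D col \<longleftrightarrow> smooth S e \<notin> tait_hes D col"
proof -
  obtain c k where ce: "e = (c,k)" by force
  have ck: "c \<in> dg_xings D" "k < 4" using e ce by (auto simp: ends_iff)
  show "smooth S e \<in> dg_ends D" "smooth S (smooth S e) = e"
    "e \<in> tait_hes D col \<longleftrightarrow> smooth S e \<notin> tait_hes D col"
    using k4_cases[OF ck(2)] ck unfolding ce
    by (auto simp: smooth_def ends_iff hes_iff colored_corner_def)
qed

lemma tau_eq:
  assumes h: "h \<in> tait_hes D col"
  shows "dg_arc D (smooth S' h) =
     (if h \<in> mk D col S' then tait_rot D ((\<lambda>(c,k). (c, (k + 2) mod 4)) h) else tait_rot D h)"
proof -
  obtain c k where ce: "h = (c,k)" by force
  have ck: "c \<in> dg_xings D" "k < 4" "colored_corner col c k" using h ce by (auto simp: hes_iff)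
  show ?thesis
    using k4_cases[OF ck(2)] ck unfolding ce
    apply (auto simp: smooth_def mk_iff hes_iff colored_corner_def tait_rot_def)
    apply (simp_all add: numeral_2_eq_2)
    done
qed

lemma rot_props:
  assumes wf: "vdiagram_wf D" and cb: "checkerboard_coloring D col"
  shows "\<And>h. h \<in> tait_hes D col \<Longrightarrow> tait_rot D h \<in> tait_hes D col"
    and "inj_on (tait_rot D) (tait_hes D col)"
proof -
  fix h assume h: "h \<in> tait_hes D col"
  obtain c k where ce: "h = (c,k)" by force
  have ck: "c \<in> dg_xings D" "k < 4" "colored_corner col c k" using h ce by (auto simp: hes_iff)
  have e: "(c, (k+1) mod 4) \<in> dg_ends D" using ck by (simp add: ends_iff)
  have "(c, (k+1) mod 4) \<notin> tait_hes D col"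
    using k4_cases[OF ck(2)] ck by (auto simp: hes_iff colored_corner_def)
  then have "dg_arc D (c, (k+1) mod 4) \<in> tait_hes D col" using arc_col[OF wf cb e] by simp
  then show "tait_rot D h \<in> tait_hes D col" by (simp add: ce tait_rot_def)
next
  show "inj_on (tait_rot D) (tait_hes D col)"
  proof (rule inj_onI)
    fix x y assume x: "x \<in> tait_hes D col" and y: "y \<in> tait_hes D col" and e: "tait_rot D x = tait_rot D y"
    obtain c k where cx: "x = (c,k)" by force
    obtain c' k' where cy: "y = (c',k')" by force
    have ck: "c \<in> dg_xings D" "k < 4" using x cx by (auto simp: hes_iff)
    have ck': "c' \<in> dg_xings D" "k' < 4" using y cy by (auto simp: hes_iff)
    have e1: "(c, (k+1) mod 4) \<in> dg_ends D" using ck by (simp add: ends_iff)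
    have e2: "(c', (k'+1) mod 4) \<in> dg_ends D" using ck' by (simp add: ends_iff)
    have "dg_arc D (c, (k+1) mod 4) = dg_arc D (c', (k'+1) mod 4)" using e cx cy by (simp add: tait_rot_def)
    then have "dg_arc D (dg_arc D (c, (k+1) mod 4)) = dg_arc D (dg_arc D (c', (k'+1) mod 4))" by simp
    then have "(c, (k+1) mod 4) = (c', (k'+1) mod 4)" using arc_props(2)[OF wf e1] arc_props(2)[OF wf e2] by simp
    then show "x = y" using k4_cases[OF ck(2)] k4_cases[OF ck'(2)] cx cy by auto
  qed
qed



lemma circles_eq:
  assumes wf: "vdiagram_wf D" and cb: "checkerboard_coloring D col"
  shows "state_circles D S' = bc (tait_graph D col) (mk D col S')"
proof -
  define E where "E = dg_ends D"
  define C where "C = tait_hes D col"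
  define S where "S = mk D col S'"
  define rot where "rot = tait_rot D"
  define opp :: "'a \<times> nat \<Rightarrow> 'a \<times> nat" where "opp = (\<lambda>(c,k). (c, (k + 2) mod 4))"
  define \<tau> where "\<tau> = (\<lambda>h. dg_arc D (smooth S' h))"
  define G where "G = tait_graph D col"
  define L where "L = dg_loops D"
  have finE: "finite E" using wf unfolding E_def dg_ends_def vdiagram_wf_def by simp
  have CE: "C \<subseteq> E" unfolding C_def E_def by (rule hes_ends)
  have finC: "finite C" using finE CE by (rule finite_subset[rotated])
  have SC: "S \<subseteq> C" unfolding S_def C_def mk_def by blast
  have A: "card (E // ({(e, smooth S' e) | e. e \<in> E} \<union> {(e, dg_arc D e) | e. e \<in> E})\<^sup>*) = card (orb \<tau> ` C)"
    unfolding \<tau>_def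
  proof (rule lemmaA)
    show "finite E" by (rule finE)
    show "C \<subseteq> E" by (rule CE)
    fix e assume e: "e \<in> E"
    then have e': "e \<in> dg_ends D" unfolding E_def .
    show "smooth S' e \<in> E" unfolding E_def by (rule smooth_props(1)[OF e'])
    show "smooth S' (smooth S' e) = e" by (rule smooth_props(2)[OF e'])
    show "dg_arc D e \<in> E" unfolding E_def by (rule arc_props(1)[OF wf e'])
    show "dg_arc D (dg_arc D e) = e" by (rule arc_props(2)[OF wf e'])
    show "e \<in> C \<longleftrightarrow> smooth S' e \<notin> C" unfolding C_def by (rule smooth_props(3)[OF e'])
    show "e \<in> C \<longleftrightarrow> dg_arc D e \<notin> C" unfolding C_def by (rule arc_col[OF wf cb e'])
  qed
  have sc: "state_circles D S' = card (orb \<tau> ` C) + L"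
    using A unfolding state_circles_def E_def L_def by simp
  have clt: "\<tau> x \<in> C" if x: "x \<in> C" for x
  proof -
    have xE: "x \<in> dg_ends D" using x CE unfolding E_def by blast
    have "smooth S' x \<notin> C" using smooth_props(3)[OF xE, of col S'] x unfolding C_def by simp
    moreover have "smooth S' x \<in> dg_ends D" by (rule smooth_props(1)[OF xE])
    ultimately show ?thesis using arc_col[OF wf cb, of "smooth S' x"] unfolding \<tau>_def C_def by simp
  qed
  have injt: "inj_on \<tau> C"
  proof (rule inj_onI)
    fix x y assume x: "x \<in> C" and y: "y \<in> C" and e: "\<tau> x = \<tau> y"
    have xE: "x \<in> dg_ends D" and yE: "y \<in> dg_ends D" using x y CE unfolding E_def by auto
    have "dg_arc D (dg_arc D (smooth S' x)) = dg_arc D (dg_arc D (smooth S' y))" using e unfolding \<tau>_def by simp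
    then have "smooth S' x = smooth S' y"
      using arc_props(2)[OF wf smooth_props(1)[OF xE]] arc_props(2)[OF wf smooth_props(1)[OF yE]] by simp
    then have "smooth S' (smooth S' x) = smooth S' (smooth S' y)" by simp
    then show "x = y" using smooth_props(2)[OF xE] smooth_props(2)[OF yE] by simp
  qed
  have clr: "rot x \<in> C" if "x \<in> C" for x using rot_props(1)[OF wf cb] that unfolding rot_def C_def .
  have injr: "inj_on rot C" using rot_props(2)[OF wf cb] unfolding rot_def C_def .
  have oppS: "opp h \<in> S" if h: "h \<in> S" for h
  proof -
    obtain c k where ce: "h = (c,k)" by force
    have ck: "c \<in> dg_xings D" "k < 4" "colored_corner col c k" "c \<in> S' \<longleftrightarrow> col c"
      using h ce unfolding S_def by (auto simp: mk_iff hes_iff)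
    show ?thesis using k4_cases[OF ck(2)] ck unfolding ce opp_def S_def
      by (auto simp: mk_iff hes_iff colored_corner_def)
  qed
  have teq: "\<tau> x = (if x \<in> S then rot (opp x) else rot x)" if "x \<in> C" for x
    using tau_eq[of x D col S'] that unfolding \<tau>_def S_def rot_def opp_def C_def by simp
  have tr: "\<tau> x = rot x" if "x \<in> C" "x \<notin> S" for x using teq that by simp
  define \<phi> where "\<phi> = (\<lambda>h. rot_sub G S (sg_opp G h))"
  have rs: "rot_sub G S x = (rot ^^ (LEAST k. 0 < k \<and> (rot ^^ k) x \<in> S)) x" for x
    unfolding rot_sub_def G_def rot_def by (simp add: tait_graph_def)
  have so: "sg_opp G = opp" unfolding G_def opp_def by (simp add: tait_graph_def)
  have phi: "\<phi> h = (\<tau> ^^ (LEAST k. 0 < k \<and> (\<tau> ^^ k) h \<in> S)) h" if h: "h \<in> S" for h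
  proof -
    have hC: "h \<in> C" using h SC by blast
    have "\<phi> h = (rot ^^ (LEAST k. 0 < k \<and> (rot ^^ k) (opp h) \<in> S)) (opp h)"
      unfolding \<phi>_def so rs ..
    also have "\<dots> = (\<tau> ^^ (LEAST k. 0 < k \<and> (\<tau> ^^ k) h \<in> S)) h"
    proof (rule lemmaC[where C=C])
      show "finite C" by (rule finC)
      show "\<And>x. x \<in> C \<Longrightarrow> rot x \<in> C" by (rule clr)
      show "inj_on rot C" by (rule injr)
      show "S \<subseteq> C" by (rule SC)
      show "opp h \<in> S" by (rule oppS[OF h])
      show "\<tau> h = rot (opp h)" using teq[OF hC] h by simp
      show "\<And>x. x \<in> C \<Longrightarrow> x \<notin> S \<Longrightarrow> \<tau> x = rot x" by (rule tr)
    qed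
    finally show ?thesis .
  qed
  have B: "card (orb \<phi> ` S) + card {Q \<in> orb \<tau> ` C. Q \<inter> S = {}} = card (orb \<tau> ` C)"
    by (rule lemmaB[OF finC _ injt SC phi]) (rule clt)
  have Dq: "{Q \<in> orb rot ` C. \<forall>h\<in>S. orb rot h \<noteq> Q} = {Q \<in> orb \<tau> ` C. Q \<inter> S = {}}"
    by (rule lemmaD[OF finC _ injr _ injt tr]) (rule clr, assumption, rule clt, assumption)
  have sv: "sg_verts G = Inl ` (orb rot ` C) \<union> Inr ` {..<L}"
    unfolding G_def rot_def C_def L_def by (simp add: tait_graph_def orbits_orb)
  have svt: "sg_vert G h = Inl (orb rot h)" for h
    unfolding G_def rot_def by (simp add: tait_graph_def orb_def)
  have V: "{v \<in> sg_verts G. \<forall>h\<in>S. sg_vert G h \<noteq> v}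
      = Inl ` {Q \<in> orb rot ` C. \<forall>h\<in>S. orb rot h \<noteq> Q} \<union> Inr ` {..<L}"
    unfolding sv svt by auto
  have cV: "card (Inl ` {Q \<in> orb rot ` C. \<forall>h\<in>S. orb rot h \<noteq> Q} \<union> (Inr ` {..<L} :: (('a \<times> nat) set + nat) set))
      = card {Q \<in> orb rot ` C. \<forall>h\<in>S. orb rot h \<noteq> Q} + L"
  proof -
    have f1: "finite (Inl ` {Q \<in> orb rot ` C. \<forall>h\<in>S. orb rot h \<noteq> Q} :: (('a \<times> nat) set + nat) set)"
      using finC by simp
    have f2: "finite (Inr ` {..<L} :: (('a \<times> nat) set + nat) set)" by simp
    have d: "Inl ` {Q \<in> orb rot ` C. \<forall>h\<in>S. orb rot h \<noteq> Q} \<inter> (Inr ` {..<L} :: (('a \<times> nat) set + nat) set) = {}"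
      by auto
    show ?thesis using card_Un_disjoint[OF f1 f2 d] by (simp add: card_image)
  qed
  have "bc G S = card (orb \<phi> ` S) + card {v \<in> sg_verts G. \<forall>h\<in>S. sg_vert G h \<noteq> v}"
    unfolding bc_def \<phi>_def orbits_orb ..
  also have "\<dots> = card (orb \<phi> ` S) + card {Q \<in> orb \<tau> ` C. Q \<inter> S = {}} + L"
    using V cV Dq by simp
  also have "\<dots> = card (orb \<tau> ` C) + L" using B by simp
  finally show ?thesis using sc unfolding G_def S_def by simp
qed



lemma sum_bij:
  assumes wf: "vdiagram_wf D" and cb: "checkerboard_coloring D col"
  shows "bij_betw (mk D col) (Pow (dg_xings D))
     {S. S \<subseteq> sg_hes (tait_graph D col) \<and> (\<forall>h\<in>S. sg_opp (tait_graph D col) h \<in> S)}"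
proof -
  define X where "X = dg_xings D"
  define C where "C = tait_hes D col"
  define k0 where "k0 c = (if col c then 0 else 1::nat)" for c
  have hes: "sg_hes (tait_graph D col) = C" unfolding C_def by (simp add: tait_graph_def)
  have opp: "sg_opp (tait_graph D col) = (\<lambda>(c,k). (c, (k + 2) mod 4))" by (simp add: tait_graph_def)
  have k0C: "(c, k0 c) \<in> C" if "c \<in> X" for c
    using that unfolding C_def X_def k0_def by (auto simp: hes_iff colored_corner_def dest!: k4_cases)
  have inC: "(c,k) \<in> C \<longleftrightarrow> c \<in> X \<and> (k = k0 c \<or> k = k0 c + 2)" for c k
    unfolding C_def X_def k0_def by (auto simp: hes_iff colored_corner_def dest!: k4_cases)
  have mkin: "mk D col S' \<in> {S. S \<subseteq> C \<and> (\<forall>h\<in>S. (\<lambda>(c,k). (c, (k + 2) mod 4)) h \<in> S)}" for S'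
  proof -
    have "(c, (k + 2) mod 4) \<in> mk D col S'" if h: "(c,k) \<in> mk D col S'" for c k
    proof -
      have ck: "c \<in> X" "k = k0 c \<or> k = k0 c + 2" "c \<in> S' \<longleftrightarrow> col c"
        using h inC unfolding C_def by (auto simp: mk_iff)
      have "(c, (k + 2) mod 4) \<in> C" using ck inC unfolding k0_def by auto
      then show ?thesis using ck unfolding C_def by (simp add: mk_iff)
    qed
    then show ?thesis unfolding C_def mk_def by auto
  qed
  have inj: "inj_on (mk D col) (Pow X)"
  proof (rule inj_onI)
    fix S1 S2 assume S1: "S1 \<in> Pow X" and S2: "S2 \<in> Pow X" and e: "mk D col S1 = mk D col S2"
    have "c \<in> S1 \<longleftrightarrow> c \<in> S2" if c: "c \<in> X" for c
    proof -
      have "(c, k0 c) \<in> mk D col S1 \<longleftrightarrow> (c \<in> S1 \<longleftrightarrow> col c)" using k0C[OF c] unfolding C_def by (simp add: mk_iff)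
      moreover have "(c, k0 c) \<in> mk D col S2 \<longleftrightarrow> (c \<in> S2 \<longleftrightarrow> col c)" using k0C[OF c] unfolding C_def by (simp add: mk_iff)
      ultimately show ?thesis using e by blast
    qed
    then show "S1 = S2" using S1 S2 by blast
  qed
  have surj: "mk D col ` Pow X = {S. S \<subseteq> C \<and> (\<forall>h\<in>S. (\<lambda>(c,k). (c, (k + 2) mod 4)) h \<in> S)}"
  proof (rule equalityI; rule subsetI)
    fix S assume "S \<in> mk D col ` Pow X"
    then show "S \<in> {S. S \<subseteq> C \<and> (\<forall>h\<in>S. (\<lambda>(c,k). (c, (k + 2) mod 4)) h \<in> S)}" using mkin by blast
  next
    fix S assume S: "S \<in> {S. S \<subseteq> C \<and> (\<forall>h\<in>S. (\<lambda>(c,k). (c, (k + 2) mod 4)) h \<in> S)}"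
    have SC: "S \<subseteq> C" and ocl: "\<And>c k. (c,k) \<in> S \<Longrightarrow> (c, (k + 2) mod 4) \<in> S" using S by auto
    define S' where "S' = {c \<in> X. (c, k0 c) \<in> S \<longleftrightarrow> col c}"
    have "mk D col S' = S"
    proof (rule equalityI; rule subsetI)
      fix h assume h: "h \<in> mk D col S'"
      obtain c k where ce: "h = (c,k)" by force
      have ck: "c \<in> X" "k = k0 c \<or> k = k0 c + 2" "c \<in> S' \<longleftrightarrow> col c"
        using h inC unfolding C_def ce by (auto simp: mk_iff)
      have "(c, k0 c) \<in> S" using ck unfolding S'_def by auto
      then have "(c, k) \<in> S" using ck(2) ocl[of c "k0 c"] unfolding k0_def by auto
      then show "h \<in> S" using ce by simp
    next
      fix h assume h: "h \<in> S"
      obtain c k where ce: "h = (c,k)" by force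
      have hC: "(c,k) \<in> C" using h SC ce by blast
      then have ck: "c \<in> X" "k = k0 c \<or> k = k0 c + 2" using inC by auto
      have "(c, k) \<in> S" using h ce by simp
      then have "(c, k0 c) \<in> S" using ck(2) ocl[of c k] unfolding k0_def by auto
      then have "c \<in> S' \<longleftrightarrow> col c" unfolding S'_def using ck(1) by auto
      then show "h \<in> mk D col S'" using hC ce unfolding C_def by (simp add: mk_iff)
    qed
    moreover have "S' \<in> Pow X" unfolding S'_def by blast
    ultimately show "S \<in> mk D col ` Pow X" by blast
  qed
  show ?thesis unfolding hes opp X_def[symmetric] using inj surj by (rule bij_betw_imageI)
qed

lemma prod_edges:
  assumes wf: "vdiagram_wf D" and S': "S' \<subseteq> dg_xings D"
  shows "(\<Prod>e\<in>sg_edges (tait_graph D col). if e \<subseteq> mk D col S' then (if edge_pos (tait_graph D col) e then A else B)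
            else (if edge_pos (tait_graph D col) e then B else A))
       = A ^ card S' * B ^ card (dg_xings D - S')"
proof -
  define X where "X = dg_xings D"
  define C where "C = tait_hes D col"
  define G where "G = tait_graph D col"
  define k0 where "k0 c = (if col c then 0 else 1::nat)" for c
  define edge where "edge c = {(c, k0 c), (c, k0 c + 2)}" for c
  have finX: "finite X" using wf unfolding vdiagram_wf_def X_def by simp
  have inC: "(c,k) \<in> C \<longleftrightarrow> c \<in> X \<and> (k = k0 c \<or> k = k0 c + 2)" for c k
    unfolding C_def X_def k0_def by (auto simp: hes_iff colored_corner_def dest!: k4_cases)
  have edges: "sg_edges G = edge ` X"
  proof -
    have "sg_edges G = (\<lambda>h. {h, (\<lambda>(c,k). (c, (k + 2) mod 4)) h}) ` C"
      unfolding sg_edges_def G_def C_def by (simp add: tait_graph_def)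
    also have "\<dots> = edge ` X"
    proof (rule equalityI; rule subsetI)
      fix e assume "e \<in> (\<lambda>h. {h, (\<lambda>(c,k). (c, (k + 2) mod 4)) h}) ` C"
      then obtain c k where ck: "(c,k) \<in> C" "e = {(c,k), (c, (k + 2) mod 4)}" by auto
      then have "c \<in> X" "k = k0 c \<or> k = k0 c + 2" using inC by auto
      then have "e = edge c" using ck(2) unfolding edge_def k0_def by auto
      then show "e \<in> edge ` X" using \<open>c \<in> X\<close> by blast
    next
      fix e assume "e \<in> edge ` X"
      then obtain c where c: "c \<in> X" "e = edge c" by blast
      have "(c, k0 c) \<in> C" using inC c by simp
      moreover have "e = {(c, k0 c), (c, (k0 c + 2) mod 4)}" using c unfolding edge_def k0_def by auto
      ultimately show "e \<in> (\<lambda>h. {h, (\<lambda>(c,k). (c, (k + 2) mod 4)) h}) ` C" by force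
    qed
    finally show ?thesis .
  qed
  have inj: "inj_on edge X"
    by (rule inj_onI) (auto simp: edge_def)
  have ep: "edge_pos G (edge c) = col c" for c
  proof -
    have "(SOME h. h \<in> edge c) \<in> edge c" by (rule someI[of _ "(c, k0 c)"]) (simp add: edge_def)
    then have "fst (SOME h. h \<in> edge c) = c" unfolding edge_def by auto
    then show ?thesis unfolding edge_pos_def G_def by (simp add: tait_graph_def case_prod_beta)
  qed
  have sub: "edge c \<subseteq> mk D col S' \<longleftrightarrow> (c \<in> S' \<longleftrightarrow> col c)" if c: "c \<in> X" for c
  proof -
    have "(c, k0 c) \<in> C" "(c, k0 c + 2) \<in> C" using inC c by auto
    then show ?thesis unfolding edge_def C_def by (auto simp: mk_iff)
  qed
  have "(\<Prod>e\<in>sg_edges G. if e \<subseteq> mk D col S' then (if edge_pos G e then A else B)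
            else (if edge_pos G e then B else A))
      = (\<Prod>c\<in>X. if edge c \<subseteq> mk D col S' then (if edge_pos G (edge c) then A else B)
            else (if edge_pos G (edge c) then B else A))"
    unfolding edges by (simp add: prod.reindex[OF inj])
  also have "\<dots> = (\<Prod>c\<in>X. if c \<in> S' then A else B)"
    by (rule prod.cong) (auto simp: sub ep)
  also have "\<dots> = A ^ card S' * B ^ card (X - S')"
  proof -
    have "(\<Prod>c\<in>X. if c \<in> S' then A else B) = (\<Prod>c\<in>X \<inter> {c. c \<in> S'}. A) * (\<Prod>c\<in>X \<inter> - {c. c \<in> S'}. B)"
      by (rule prod.If_cases[OF finX])
    moreover have "X \<inter> {c. c \<in> S'} = S'" using S' unfolding X_def by auto
    moreover have "X \<inter> - {c. c \<in> S'} = X - S'" by auto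
    ultimately show ?thesis by simp
  qed
  finally show ?thesis unfolding G_def X_def .
qed

lemma fpoly_bracket:
  assumes wf: "vdiagram_wf D" and cb: "checkerboard_coloring D col"
  shows "Fpoly (tait_graph D col) A B d = bracket D A B d"
proof -
  let ?G = "tait_graph D col"
  let ?T = "\<lambda>S. (\<Prod>e\<in>sg_edges ?G. if e \<subseteq> S then (if edge_pos ?G e then A else B)
                                    else (if edge_pos ?G e then B else A)) * d powi (int (bc ?G S) - 1)"
  have "Fpoly ?G A B d = sum ?T {S. S \<subseteq> sg_hes ?G \<and> (\<forall>h\<in>S. sg_opp ?G h \<in> S)}"
    unfolding Fpoly_def ..
  also have "\<dots> = (\<Sum>S'\<in>Pow (dg_xings D). ?T (mk D col S'))"
    by (rule sum.reindex_bij_betw[OF sum_bij[OF wf cb], symmetric])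
  also have "\<dots> = bracket D A B d"
    unfolding bracket_def
  proof (rule sum.cong)
    fix S' assume "S' \<in> Pow (dg_xings D)"
    then have S': "S' \<subseteq> dg_xings D" by simp
    show "?T (mk D col S') = A ^ card S' * B ^ card (dg_xings D - S') * d powi (int (state_circles D S') - 1)"
      using prod_edges[OF wf S', of col A B] circles_eq[OF wf cb, of S'] by simp
  qed simp
  finally show ?thesis .
qed

theorem corollary4p5:
  fixes D :: "'c vdiagram" and col :: "'c \<Rightarrow> bool" and t :: real
  assumes "vdiagram_wf D" and "oriented D" and "checkerboard_coloring D col" and "t > 0"
  shows "jones D t =
    (- (t powr (-3/4))) powi (- writhe D)
      * Fpoly (tait_graph D col) (t powr (-1/4)) (t powr (1/4)) (- (t powr (-1/2)) - t powr (1/2))"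
proof -
  have t0: "t \<noteq> 0" using assms(4) by simp
  have inv: "inverse (t powr a) = t powr (- a)" for a by (simp add: powr_minus)
  have p3: "(t powr (-1/4)) ^ 3 = t powr (-3/4)" using powr_power[OF t0, of "-1/4" 3] by simp
  have p2: "(t powr (-1/4)) ^ 2 = t powr (-1/2)" using powr_power[OF t0, of "-1/4" 2] by simp
  have i1: "inverse (t powr (-1/4)) = t powr (1/4)" using inv[of "-1/4"] by simp
  have i2: "(t powr (1/4)) ^ 2 = t powr (1/2)" using powr_power[OF t0, of "1/4" 2] by simp
  show ?thesis
    unfolding jones_def Let_def p3 p2 i1 i2 fpoly_bracket[OF assms(1) assms(3)] ..
qed

end
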